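(* Let $n\ge1$, $k\ge1$, and let $\pi\in\mathbf{C}(n,k)$ be increasing. Let $\pi_2=q_1q_2\cdots q_n$ be any entry of the list $\mathcal{C}(\pi)$, and let $j\ge1$ be the largest integer such that the prefix $q_1q_2\cdots q_j$ is a decreasing pre-perm. Then the successor of $\pi_2$ in $\mathcal{C}(\pi)$, considered cyclically (the successor of the last entry being the first entry), is $\mathrm{flip}_j(\pi_2)$.
   Context: Fix integers $n\ge1$, $k\ge1$. A $k$-coloured permutation of $\{1,\dots,n\}$ is a sequence $\pi=p_1\cdots p_n$ with $p_i=v_i^{c_i}$, where $v_1\cdots v_n$ is a permutation of $\{1,\dots,n\}$ and each $c_i\in\{0,\dots,k-1\}$; the set of these is $\mathbf{C}(n,k)$. A pre-perm is a prefix $p_1\cdots p_j$ ($1\le j\le n$) of some element of $\mathbf{C}(n,k)$. For $p=v^c$ and integer $s$, $p^{+s}=v^{(c+s)\bmod k}$; for $\mathbf{p}=p_1\cdots p_j$, $\mathbf{p}^{+s}=p_1^{+s}\cdots p_j^{+s}$. For $1\le i\le n$, $\mathrm{flip}_i(p_1\cdots p_n)=p_i^{+1}\cdots p_1^{+1}p_{i+1}\cdots p_n$. For a pre-perm $\mathbf{p}$ of length $j$, $\rho(\mathbf{p})=r_1\cdots r_m$ ($m=kj$) is the concatenation $\mathbf{p}^{+(k-1)}\mathbf{p}^{+(k-2)}\cdots\mathbf{p}^{+0}$ viewed circularly (indices mod $m$), and $\rho(\mathbf{p})_i=r_{i-j+1}\cdots r_{i-1}$ (length $j-1$, indices mod $m$).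 The list $\mathcal{C}(\mathbf{p})$: if $j=1$, $\mathcal{C}(p_1)=p_1^{+0},\dots,p_1^{+(k-1)}$; if $j\ge2$, $\mathcal{C}(\mathbf{p})$ is the concatenation for $i=m,m-1,\dots,1$ of the lists obtained from $\mathcal{C}(\rho(\mathbf{p})_i)$ by appending $r_i$ to every entry. Writing $\rho(1^02^0\cdots n^0)=r_1\cdots r_{nk}$ (circular), an element of $\mathbf{C}(n,k)$ is increasing if it equals $r_ir_{i+1}\cdots r_{i+n-1}$ (indices mod $nk$) for some $i$, and decreasing if it is the reverse (order reversed, colours unchanged) of an increasing element. A pre-perm is increasing (resp. decreasing) if it is a (not necessarily contiguous) subsequence of some increasing (resp. decreasing) element of $\mathbf{C}(n,k)$. *)

theory Defs
  imports Main "HOL-Library.Sublist"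
begin

text \<open>A coloured entry v^c is represented as the pair (v, c).\<close>
type_synonym centry = "nat \<times> nat"

definition cperms :: "nat \<Rightarrow> nat \<Rightarrow> centry list set" where
  "cperms n k = {p. length p = n \<and> distinct (map fst p) \<and> set (map fst p) = {1..n}
                   \<and> (\<forall>x\<in>set p. snd x < k)}"

definition preperm :: "nat \<Rightarrow> nat \<Rightarrow> centry list \<Rightarrow> bool" where
  "preperm n k q \<longleftrightarrow> (\<exists>p\<in>cperms n k. \<exists>j. 1 \<le> j \<and> j \<le> n \<and> q = take j p)"

definition cshift :: "nat \<Rightarrow> int \<Rightarrow> centry \<Rightarrow> centry" where
  "cshift k s x = (fst x, nat ((int (snd x) + s) mod int k))"

definition cshiftl :: "nat \<Rightarrow> int \<Rightarrow> centry list \<Rightarrow> centry list" where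
  "cshiftl k s p = map (cshift k s) p"

definition flip :: "nat \<Rightarrow> nat \<Rightarrow> centry list \<Rightarrow> centry list" where
  "flip k i p = rev (cshiftl k 1 (take i p)) @ drop i p"

text \<open>rho(p) = p^{+(k-1)} p^{+(k-2)} ... p^{+0}, as a list r_1..r_m (stored 0-based)\<close>
definition rho :: "nat \<Rightarrow> centry list \<Rightarrow> centry list" where
  "rho k p = concat (map (\<lambda>t. cshiftl k (int (k - 1 - t)) p) [0..<k])"

text \<open>circular 1-based access r_t, t an integer, indices mod m\<close>
definition rget :: "nat \<Rightarrow> centry list \<Rightarrow> int \<Rightarrow> centry" where
  "rget k p t = rho k p ! nat ((t - 1) mod int (length (rho k p)))"

definition rho_sub :: "nat \<Rightarrow> centry list \<Rightarrow> nat \<Rightarrow> centry list" where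
  "rho_sub k p i = map (\<lambda>d. rget k p (int i - int (length p) + int d)) [1..<length p]"

lemma length_rho_sub: "length (rho_sub k p i) = length p - 1"
  by (simp add: rho_sub_def)

function clist :: "nat \<Rightarrow> centry list \<Rightarrow> centry list list" where
  "clist k p = (if length p \<le> 1 then map (\<lambda>s. cshiftl k (int s) p) [0..<k]
     else concat (map (\<lambda>i. map (\<lambda>q. q @ [rget k p (int i)]) (clist k (rho_sub k p i)))
                      (rev [1..<k * length p + 1])))"
  by pat_completeness auto
termination
  by (relation "measure (\<lambda>(k, p). length p)") (auto simp: length_rho_sub)

declare clist.simps[simp del]

definition idperm :: "nat \<Rightarrow> centry list" where
  "idperm n = map (\<lambda>v. (v, 0)) [1..<n + 1]"

definition increasing :: "nat \<Rightarrow> nat \<Rightarrow> centry list \<Rightarrow> bool" where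
  "increasing n k p \<longleftrightarrow>
     (\<exists>i::int. p = map (\<lambda>d. rget k (idperm n) (i + int d)) [0..<n])"

definition decreasing :: "nat \<Rightarrow> nat \<Rightarrow> centry list \<Rightarrow> bool" where
  "decreasing n k p \<longleftrightarrow> increasing n k (rev p)"

definition increasing_pre :: "nat \<Rightarrow> nat \<Rightarrow> centry list \<Rightarrow> bool" where
  "increasing_pre n k q \<longleftrightarrow> preperm n k q \<and> (\<exists>p. increasing n k p \<and> subseq q p)"

definition decreasing_pre :: "nat \<Rightarrow> nat \<Rightarrow> centry list \<Rightarrow> bool" where
  "decreasing_pre n k q \<longleftrightarrow> preperm n k q \<and> (\<exists>p. decreasing n k p \<and> subseq q p)"

end

theory Submission
  imports Defs
begin

definition R :: "nat \<Rightarrow> centry list \<Rightarrow> int \<Rightarrow> centry" where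
  "R k p t = cshift k (- (t div int (length p))) (p ! nat (t mod int (length p)))"

definition win :: "nat \<Rightarrow> centry list \<Rightarrow> int \<Rightarrow> nat \<Rightarrow> centry list" where
  "win k p s l = map (\<lambda>d. R k p (s + int d)) [0..<l]"

definition dpre :: "nat \<Rightarrow> centry list \<Rightarrow> centry list \<Rightarrow> bool" where
  "dpre k p q \<longleftrightarrow> (\<exists>s. subseq q (rev (win k p s (length p))))"

definition maxdp :: "nat \<Rightarrow> centry list \<Rightarrow> centry list \<Rightarrow> nat \<Rightarrow> bool" where
  "maxdp k p a l \<longleftrightarrow> 1 \<le> l \<and> l \<le> length p \<and> dpre k p (take l a) \<and>
     (\<forall>l'. l < l' \<and> l' \<le> length p \<longrightarrow> \<not> dpre k p (take l' a))"

fun adj :: "'a list \<Rightarrow> 'a \<Rightarrow> 'a \<Rightarrow> bool" where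
  "adj (x # y # zs) a b = ((x = a \<and> y = b) \<or> adj (y # zs) a b)"
| "adj _ a b = False"

definition cw :: "nat \<Rightarrow> centry list \<Rightarrow> bool" where
  "cw k p \<longleftrightarrow> (\<forall>x\<in>set p. snd x < k)"

lemma fst_cshift[simp]: "fst (cshift k s e) = fst e"
  by (simp add: cshift_def)

lemma snd_cshift_less: "0 < k \<Longrightarrow> snd (cshift k s e) < k"
  by (simp add: cshift_def nat_less_iff)

lemma cshift_cshift: "0 < k \<Longrightarrow> cshift k a (cshift k b e) = cshift k (a + b) e"
  by (simp add: cshift_def mod_add_right_eq ac_simps)

lemma cshift_0: "snd e < k \<Longrightarrow> cshift k 0 e = e"
  by (cases e) (simp add: cshift_def)

lemma cshift_cong: "a mod int k = b mod int k \<Longrightarrow> cshift k a e = cshift k b e"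
  unfolding cshift_def by (metis mod_add_right_eq)

lemma cshift_mult: "snd e < k \<Longrightarrow> cshift k (int k * m) e = e"
proof -
  assume "snd e < k"
  have "(int k * m) mod int k = 0 mod int k" by simp
  then have "cshift k (int k * m) e = cshift k 0 e" by (rule cshift_cong)
  then show ?thesis using \<open>snd e < k\<close> cshift_0 by simp
qed

lemma snd_R_less: "0 < k \<Longrightarrow> snd (R k p t) < k"
  by (simp add: R_def snd_cshift_less)

lemma fst_R: "p \<noteq> [] \<Longrightarrow> fst (R k p t) = fst (p ! nat (t mod int (length p)))"
  by (simp add: R_def)

lemma R_add:
  assumes "p \<noteq> []" "0 < k"
  shows "R k p (t + int (length p) * m) = cshift k (- m) (R k p t)"
proof -
  have j: "int (length p) > 0" using assms by simp
  have "(t + int (length p) * m) div int (length p) = t div int (length p) + m"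
    using j by simp
  moreover have "(t + int (length p) * m) mod int (length p) = t mod int (length p)"
    by simp
  ultimately have "R k p (t + int (length p) * m) =
      cshift k (- (t div int (length p) + m)) (p ! nat (t mod int (length p)))"
    by (simp add: R_def)
  also have "\<dots> = cshift k (- m) (R k p t)"
    unfolding R_def using assms(2) by (simp add: cshift_cshift algebra_simps)
  finally show ?thesis .

qed

lemma R_nth:
  assumes "cw k p" "d < length p"
  shows "R k p (int d) = p ! d"
proof -
  have "p ! d \<in> set p" using assms by simp
  then have "snd (p ! d) < k" using assms by (auto simp: cw_def)
  then show ?thesis using assms by (simp add: R_def cshift_0)
qed

lemma R_period:
  assumes "p \<noteq> []" "0 < k"
  shows "R k p (t + int (length p * k) * m) = R k p t"
proof -
  have "R k p (t + int (length p * k) * m) = R k p (t + int (length p) * (int k * m))"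
    by (simp add: mult.assoc)
  also have "\<dots> = cshift k (- (int k * m)) (R k p t)" using R_add assms by blast
  also have "\<dots> = cshift k (int k * (- m)) (R k p t)" by simp
  also have "\<dots> = R k p t" using cshift_mult snd_R_less assms by blast
  finally show ?thesis .
qed

lemma length_win[simp]: "length (win k p s l) = l"
  by (simp add: win_def)

lemma nth_win[simp]: "d < l \<Longrightarrow> win k p s l ! d = R k p (s + int d)"
  by (simp add: win_def)

lemma win_Suc: "win k p s (Suc l) = win k p s l @ [R k p (s + int l)]"
  by (simp add: win_def)

lemma win_Cons: "win k p s (Suc l) = R k p s # win k p (s + 1) l"
  by (rule nth_equalityI) (auto simp: nth_Cons' ac_simps)

lemma win_shift:
  assumes "p \<noteq> []" "0 < k"
  shows "map (cshift k (- m)) (win k p s l) = win k p (s + int (length p) * m) l"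
proof (rule nth_equalityI)
  fix i assume "i < length (map (cshift k (- m)) (win k p s l))"
  then have i: "i < l" by simp
  have "s + int (length p) * m + int i = (s + int i) + int (length p) * m" by simp
  then show "map (cshift k (- m)) (win k p s l) ! i = win k p (s + int (length p) * m) l ! i"
    using i R_add[OF assms, of "s + int i" m] by (simp add: ac_simps)
qed simp

lemma R_win:
  assumes "p \<noteq> []" "0 < k"
  shows "R k (win k p s (length p)) t = R k p (s + t)"
proof -
  let ?j = "int (length p)"
  have j: "?j > 0" using assms by simp
  have lt: "nat (t mod ?j) < length p" using j
    by (metis nat_less_iff pos_mod_bound pos_mod_sign)
  have "R k (win k p s (length p)) t = cshift k (- (t div ?j)) (R k p (s + t mod ?j))"
    using lt j by (simp add: R_def[of k "win k p s (length p)"])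
  also have "\<dots> = R k p (s + t mod ?j + ?j * (t div ?j))"
    using R_add[OF assms, of "s + t mod ?j" "t div ?j"] by simp
  also have "s + t mod ?j + ?j * (t div ?j) = s + t"
    by (metis add.assoc add.commute mod_mult_div_eq mult.commute)
  finally show ?thesis .
qed

lemma win_win:
  assumes "p \<noteq> []" "0 < k"
  shows "win k (win k p s (length p)) t l = win k p (s + t) l"
  by (rule nth_equalityI) (auto simp: R_win[OF assms] ac_simps)

lemma dpre_win:
  assumes "p \<noteq> []" "0 < k"
  shows "dpre k (win k p s (length p)) q = dpre k p q"
proof
  assume "dpre k (win k p s (length p)) q"
  then obtain t where "subseq q (rev (win k (win k p s (length p)) t (length p)))"
    by (auto simp: dpre_def)
  then show "dpre k p q" unfolding dpre_def win_win[OF assms] by blast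
next
  assume "dpre k p q"
  then obtain t where t: "subseq q (rev (win k p t (length p)))"
    by (auto simp: dpre_def)
  have "win k (win k p s (length p)) (t - s) (length p) = win k p t (length p)"
    by (simp add: win_win[OF assms])
  then show "dpre k (win k p s (length p)) q" unfolding dpre_def using t
    by (metis length_win)
qed

lemma win_0:
  assumes "cw k p"
  shows "win k p 0 (length p) = p"
  by (rule nth_equalityI) (auto simp: R_nth[OF assms])

lemma win_decomp:
  assumes "cw k p" "c \<le> length p" "0 < k"
  shows "win k p (int c) (length p) = drop c p @ map (cshift k (-1)) (take c p)"
proof (rule nth_equalityI)
  show "length (win k p (int c) (length p)) = length (drop c p @ map (cshift k (-1)) (take c p))"
    using assms by simp
next
  fix d assume d: "d < length (win k p (int c) (length p))"
  then have d': "d < length p" by simp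
  then have pne: "p \<noteq> []" by auto
  show "win k p (int c) (length p) ! d = (drop c p @ map (cshift k (-1)) (take c p)) ! d"
  proof (cases "c + d < length p")
    case True
    then have "d < length p - c" by arith
    then show ?thesis using True d' assms by (simp add: nth_append R_nth[OF assms(1)] flip: of_nat_add)
  next
    case False
    have e: "int c + int d = int (c + d - length p) + int (length p) * 1"
      using False by simp
    have lt: "c + d - length p < length p" using False d' assms(2) by arith
    have "R k p (int c + int d) = cshift k (-1) (R k p (int (c + d - length p)))"
      unfolding e R_add[OF pne assms(3)] by simp
    also have "\<dots> = cshift k (-1) (p ! (c + d - length p))"
      using lt R_nth[OF assms(1)] by simp
    finally have "R k p (int c + int d) = cshift k (-1) (p ! (c + d - length p))" .
    moreover have "\<not> d < length p - c" using False by arith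
    moreover have "d - (length p - c) = c + d - length p" using False assms(2) by arith
    ultimately show ?thesis using False d' assms by (simp add: nth_append)
  qed
qed

lemma win_gen:
  assumes "p \<noteq> []" "0 < k"
  shows "win k p s l = map (cshift k (- (s div int (length p)))) (win k p (s mod int (length p)) l)"
  unfolding win_shift[OF assms]
  by (metis mod_div_mult_eq mult.commute)

lemma subseq_remove:
  assumes "subseq xs (ys @ y # zs)" "y \<notin> set xs"
  shows "subseq xs (ys @ zs)"
proof -
  obtain xs1 xs2 where x: "xs = xs1 @ xs2" "subseq xs1 ys" "subseq xs2 (y # zs)"
    by (rule subseq_appendE[OF assms(1)])
  have "subseq xs2 zs"
  proof (cases xs2)
    case Nil then show ?thesis by simp
  next
    case (Cons a as)
    then have "a \<noteq> y" using assms(2) x(1) by (metis Un_iff list.set_intros(1) set_append)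
    then show ?thesis using x(3) Cons subseq_Cons2_neq by metis
  qed
  then show ?thesis unfolding x(1) by (rule list_emb_append_mono[OF x(2)])
qed

lemma subseq_insert: "subseq (ys @ zs) (ys @ y # zs)"
  unfolding subseq_append' by (rule list_emb_Cons) (rule subseq_order.order_refl)

lemma cw_butlast: "cw k u \<Longrightarrow> cw k (butlast u)"
  by (auto simp: cw_def dest: in_set_butlastD)

lemma split_win:
  assumes "cw k u" "0 < k" "2 \<le> length u" "c \<le> length u - 1"
  shows "win k u (int (length u) * m + int c) (length u) =
           map (cshift k (- m)) (drop c (butlast u)) @ cshift k (- m) (last u) #
           map (cshift k (- m)) (map (cshift k (-1)) (take c (butlast u)))"
    and "win k (butlast u) (int (length u - 1) * m + int c) (length u - 1) =
           map (cshift k (- m)) (drop c (butlast u)) @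
           map (cshift k (- m)) (map (cshift k (-1)) (take c (butlast u)))"
proof -
  have une: "u \<noteq> []" using assms by auto
  have bne: "butlast u \<noteq> []" using assms by (cases u rule: rev_cases) auto
  have lb: "length (butlast u) = length u - 1" by simp
  obtain v y where ub: "u = v @ [y]" using une by (cases u rule: rev_cases) auto
  have d: "drop c u = drop c (butlast u) @ [last u]"
    using assms(4) ub by simp
  have t: "take c u = take c (butlast u)"
    using assms(4) ub by simp
  have "win k u (int (length u) * m + int c) (length u) =
        map (cshift k (- m)) (win k u (int c) (length u))"
    using win_shift[OF une assms(2), of m "int c" "length u"] by (simp only: add.commute)
  also have "\<dots> = map (cshift k (- m)) (drop c u @ map (cshift k (-1)) (take c u))"
    using win_decomp[OF assms(1) _ assms(2), of c] assms(4) by simp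
  finally show "win k u (int (length u) * m + int c) (length u) =
           map (cshift k (- m)) (drop c (butlast u)) @ cshift k (- m) (last u) #
           map (cshift k (- m)) (map (cshift k (-1)) (take c (butlast u)))"
    using d t by simp
  have "win k (butlast u) (int (length u - 1) * m + int c) (length u - 1) =
        map (cshift k (- m)) (win k (butlast u) (int c) (length (butlast u)))"
    using win_shift[OF bne assms(2), of m "int c" "length u - 1"] by (simp only: add.commute length_butlast)
  also have "\<dots> = map (cshift k (- m)) (drop c (butlast u) @ map (cshift k (-1)) (take c (butlast u)))"
    using win_decomp[OF cw_butlast[OF assms(1)] _ assms(2), of c] assms(4) by simp
  finally show "win k (butlast u) (int (length u - 1) * m + int c) (length u - 1) =
           map (cshift k (- m)) (drop c (butlast u)) @
           map (cshift k (- m)) (map (cshift k (-1)) (take c (butlast u)))"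
    by simp
qed

lemma int_split1: "0 < (j::int) \<Longrightarrow> s = j * (s div j) + int (nat (s mod j))"
  by simp

lemma int_split2: "0 < (j::int) \<Longrightarrow> nat (s mod j) < nat j"
  by (simp add: nat_less_iff)

lemma dpre_butlast:
  assumes "cw k u" "0 < k" "2 \<le> length u" "fst (last u) \<notin> fst ` set q"
  shows "dpre k (butlast u) q \<longleftrightarrow> dpre k u q"
proof
  assume "dpre k (butlast u) q"
  then obtain s where s: "subseq q (rev (win k (butlast u) s (length u - 1)))"
    by (auto simp: dpre_def)
  let ?j = "int (length u - 1)"
  define m where "m = s div ?j"
  define c where "c = nat (s mod ?j)"
  have jp: "?j > 0" using assms(3) by linarith
  have sc: "s = ?j * m + int c" unfolding m_def c_def by (rule int_split1[OF jp])
  have "c < nat ?j" unfolding c_def by (rule int_split2[OF jp])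
  then have c': "c \<le> length u - 1" by simp
  let ?A = "map (cshift k (- m)) (drop c (butlast u))"
  let ?B = "map (cshift k (- m)) (map (cshift k (-1)) (take c (butlast u)))"
  let ?y = "cshift k (- m) (last u)"
  have e1: "win k (butlast u) s (length u - 1) = ?A @ ?B"
    unfolding sc by (rule split_win(2)[OF assms(1-3) c'])
  have "subseq q (rev ?B @ rev ?A)"
    using s unfolding e1 by simp
  moreover have "subseq (rev ?B @ rev ?A) (rev ?B @ ?y # rev ?A)" by (rule subseq_insert)
  ultimately have "subseq q (rev ?B @ ?y # rev ?A)" by (rule subseq_order.order_trans)
  moreover have e2: "win k u (int (length u) * m + int c) (length u) = ?A @ ?y # ?B"
    by (rule split_win(1)[OF assms(1-3) c'])
  ultimately have "subseq q (rev (win k u (int (length u) * m + int c) (length u)))"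
    unfolding e2 by simp
  then show "dpre k u q" unfolding dpre_def by blast
next
  assume "dpre k u q"
  then obtain s where s: "subseq q (rev (win k u s (length u)))"
    by (auto simp: dpre_def)
  let ?j = "int (length u)"
  define m where "m = s div ?j"
  define c where "c = nat (s mod ?j)"
  have jp: "?j > 0" using assms(3) by linarith
  have sc: "s = ?j * m + int c" unfolding m_def c_def by (rule int_split1[OF jp])
  have "c < nat ?j" unfolding c_def by (rule int_split2[OF jp])
  then have c': "c \<le> length u - 1" by simp
  let ?A = "map (cshift k (- m)) (drop c (butlast u))"
  let ?B = "map (cshift k (- m)) (map (cshift k (-1)) (take c (butlast u)))"
  let ?y = "cshift k (- m) (last u)"
  have e1: "win k u s (length u) = ?A @ ?y # ?B"
    unfolding sc by (rule split_win(1)[OF assms(1-3) c'])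
  have "subseq q (rev ?B @ ?y # rev ?A)"
    using s unfolding e1 by simp
  moreover have "?y \<notin> set q" using assms(4) by (metis fst_cshift image_eqI)
  ultimately have "subseq q (rev ?B @ rev ?A)" by (rule subseq_remove)
  moreover have e2: "win k (butlast u) (int (length u - 1) * m + int c) (length u - 1) = ?A @ ?B"
    by (rule split_win(2)[OF assms(1-3) c'])
  ultimately have "subseq q (rev (win k (butlast u) (int (length u - 1) * m + int c) (length u - 1)))"
    unfolding e2 by simp
  then show "dpre k (butlast u) q" unfolding dpre_def length_butlast by blast
qed

lemma cshift_inj:
  assumes "0 < k" "cshift k a e = cshift k b e"
  shows "a mod int k = b mod int k"
proof -
  have "nat ((int (snd e) + a) mod int k) = nat ((int (snd e) + b) mod int k)"
    using assms(2) by (simp add: cshift_def)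
  then have "(int (snd e) + a) mod int k = (int (snd e) + b) mod int k"
    using assms(1) by (simp add: eq_nat_nat_iff)
  then have "(int (snd e) + a - int (snd e)) mod int k = (int (snd e) + b - int (snd e)) mod int k"
    by (rule mod_diff_cong) simp
  then show ?thesis by simp
qed

lemma R_inj:
  assumes "p \<noteq> []" "0 < k" "distinct (map fst p)" "R k p s = R k p t"
  shows "\<exists>m. t = s + int (length p * k) * m"
proof -
  let ?j = "int (length p)"
  have jp: "?j > 0" using assms(1) by simp
  have ls: "nat (s mod ?j) < length p" and lt: "nat (t mod ?j) < length p"
    using jp by (simp_all add: nat_less_iff)
  have "fst (p ! nat (s mod ?j)) = fst (p ! nat (t mod ?j))"
    using arg_cong[OF assms(4), of fst] by (simp add: R_def)
  then have "map fst p ! nat (s mod ?j) = map fst p ! nat (t mod ?j)" using ls lt by simp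
  then have "nat (s mod ?j) = nat (t mod ?j)"
    using nth_eq_iff_index_eq[OF assms(3), of "nat (s mod ?j)" "nat (t mod ?j)"] ls lt by simp
  then have r: "s mod ?j = t mod ?j" using jp by (simp add: eq_nat_nat_iff)
  then have "cshift k (- (s div ?j)) (p ! nat (s mod ?j)) = cshift k (- (t div ?j)) (p ! nat (s mod ?j))"
    using assms(4) by (simp add: R_def)
  then have "(- (s div ?j)) mod int k = (- (t div ?j)) mod int k"
    using cshift_inj[OF assms(2)] by blast
  then have "int k dvd (- (s div ?j)) - (- (t div ?j))"
    by (simp add: mod_eq_dvd_iff)
  then obtain m0 where m0: "- (s div ?j) - - (t div ?j) = int k * m0" by (rule dvdE)
  define m where "m = m0"
  have m: "t div ?j - s div ?j = int k * m" using m0 unfolding m_def by simp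
  have "t = ?j * (t div ?j) + t mod ?j" by simp
  also have "\<dots> = ?j * (s div ?j) + s mod ?j + ?j * (int k * m)"
    using m r by (simp add: algebra_simps)
  also have "\<dots> = s + int (length p * k) * m" by (simp add: algebra_simps)
  finally show ?thesis by blast
qed

lemma win_period:
  assumes "p \<noteq> []" "0 < k"
  shows "win k p (s + int (length p * k) * m) l = win k p s l"
proof (rule nth_equalityI)
  fix i assume "i < length (win k p (s + int (length p * k) * m) l)"
  then have i: "i < l" by simp
  have "s + int (length p * k) * m + int i = (s + int i) + int (length p * k) * m" by simp
  then show "win k p (s + int (length p * k) * m) l ! i = win k p s l ! i"
    using i R_period[OF assms, of "s + int i" m] by (simp add: ac_simps)
qed simp

lemma map_fst_win:
  assumes "p \<noteq> []" "0 < k" "cw k p"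
  shows "map fst (win k p s (length p)) = rotate (nat (s mod int (length p))) (map fst p)"
proof -
  let ?j = "int (length p)"
  let ?c = "nat (s mod ?j)"
  have c: "?c < length p" using assms(1) by (simp add: nat_less_iff)
  have ic: "int ?c = s mod ?j" using assms(1) by simp
  have "win k p s (length p) = map (cshift k (- (s div ?j))) (win k p (s mod ?j) (length p))"
    by (rule win_gen[OF assms(1,2)])
  then have "map fst (win k p s (length p)) = map fst (win k p (s mod ?j) (length p))"
    by (simp add: comp_def)
  also have "\<dots> = map fst (win k p (int ?c) (length p))"
    by (simp only: ic)
  finally have "map fst (win k p s (length p)) = map fst (win k p (int ?c) (length p))" .
  also have "\<dots> = map fst (drop ?c p @ map (cshift k (-1)) (take ?c p))"
    using win_decomp[OF assms(3) _ assms(2), of ?c] c by simp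
  also have "\<dots> = drop ?c (map fst p) @ take ?c (map fst p)"
    by (simp add: drop_map take_map)
  also have "\<dots> = rotate ?c (map fst p)"
    using c by (simp add: rotate_drop_take)
  finally show ?thesis .
qed

lemma cw_win: "0 < k \<Longrightarrow> cw k (win k p s l)"
  by (auto simp: cw_def win_def snd_R_less)

lemma concat_blocks:
  "concat (map (\<lambda>u. map (\<lambda>d. h (u * j + d)) [0..<j]) [0..<K]) = map h [0..<K * j]"
proof (induction K)
  case 0 then show ?case by simp
next
  case (Suc K)
  have 1: "[0..<Suc K * j] = [0..<K * j] @ [K * j..<K * j + j]"
    by (metis add.commute mult_Suc upt_add_eq_append zero_le)
  have 2: "map h [K * j..<K * j + j] = map (\<lambda>d. h (K * j + d)) [0..<j]"
    by (rule nth_equalityI) auto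
  have 3: "concat (map (\<lambda>u. map (\<lambda>d. h (u * j + d)) [0..<j]) [0..<Suc K]) =
     concat (map (\<lambda>u. map (\<lambda>d. h (u * j + d)) [0..<j]) [0..<K]) @ map (\<lambda>d. h (K * j + d)) [0..<j]"
    by simp
  show ?case unfolding 3 1 map_append Suc.IH 2 ..
qed

lemma rho_eq:
  assumes "p \<noteq> []" "0 < k" "cw k p"
  shows "rho k p = map (\<lambda>n. R k p (int (length p) + int n)) [0..<k * length p]"
proof -
  let ?j = "length p"
  have blk: "cshiftl k (int (k - 1 - t)) p = map (\<lambda>d. R k p (int ?j + int (t * ?j + d))) [0..<?j]"
    if t: "t < k" for t
  proof (rule nth_equalityI)
    fix d assume "d < length (cshiftl k (int (k - 1 - t)) p)"
    then have d: "d < ?j" by (simp add: cshiftl_def)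
    have e: "int ?j + int (t * ?j + d) = int d + int ?j * (int t + 1)"
      by (simp add: algebra_simps)
    have "R k p (int ?j + int (t * ?j + d)) = cshift k (- (int t + 1)) (p ! d)"
      unfolding e R_add[OF assms(1,2)] R_nth[OF assms(3) d] by simp
    also have "\<dots> = cshift k (int (k - 1 - t)) (p ! d)"
    proof (rule cshift_cong)
      have "int (k - 1 - t) = (- (int t + 1)) + int k * 1" using t by simp
      then show "(- (int t + 1)) mod int k = int (k - 1 - t) mod int k"
        by (metis mod_mult_self1 mult.commute)
    qed
    finally show "cshiftl k (int (k - 1 - t)) p ! d = map (\<lambda>d. R k p (int ?j + int (t * ?j + d))) [0..<?j] ! d"
      using d by (simp add: cshiftl_def)
  qed (simp add: cshiftl_def)
  have "rho k p = concat (map (\<lambda>t. map (\<lambda>d. R k p (int ?j + int (t * ?j + d))) [0..<?j]) [0..<k])"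
    unfolding rho_def
  proof (rule arg_cong[where f=concat], rule map_cong)
    fix t assume "t \<in> set [0..<k]"
    then have "t < k" by simp
    then show "cshiftl k (int (k - 1 - t)) p = map (\<lambda>d. R k p (int ?j + int (t * ?j + d))) [0..<?j]"
      by (rule blk)
  qed simp
  also have "\<dots> = map (\<lambda>n. R k p (int ?j + int n)) [0..<k * ?j]"
    by (rule concat_blocks)
  finally show ?thesis .
qed

lemma rget_eq:
  assumes "p \<noteq> []" "0 < k" "cw k p"
  shows "rget k p t = R k p (int (length p) + t - 1)"
proof -
  let ?j = "length p"
  let ?N = "int (k * ?j)"
  have N: "?N > 0" using assms by simp
  have len: "length (rho k p) = k * ?j" using rho_eq[OF assms] by simp
  have lt: "nat ((t - 1) mod ?N) < k * ?j" using N by (simp add: nat_less_iff)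
  have "rget k p t = R k p (int ?j + (t - 1) mod ?N)"
    unfolding rget_def len using rho_eq[OF assms] lt N by simp
  also have "\<dots> = R k p (int ?j + (t - 1) mod ?N + int (?j * k) * ((t - 1) div ?N))"
    using R_period[OF assms(1,2)] by simp
  also have "int ?j + (t - 1) mod ?N + int (?j * k) * ((t - 1) div ?N) = int ?j + t - 1"
    by (metis (no_types, lifting) add.assoc add_diff_eq mod_mult_div_eq mult.commute)
  finally show ?thesis .
qed

lemma rho_sub_eq:
  assumes "p \<noteq> []" "0 < k" "cw k p"
  shows "rho_sub k p i = win k p (int i) (length p - 1)"
proof (rule nth_equalityI)
  fix d assume "d < length (rho_sub k p i)"
  then have d: "d < length p - 1" by (simp add: length_rho_sub)
  then have "[1..<length p] ! d = Suc d" by simp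
  then show "rho_sub k p i ! d = win k p (int i) (length p - 1) ! d"
    using d by (simp add: rho_sub_def rget_eq[OF assms] algebra_simps)
qed (simp add: length_rho_sub)

lemma clist_step:
  assumes "2 \<le> length p" "0 < k" "cw k p"
  shows "clist k p = concat (map (\<lambda>i. map (\<lambda>q. q @ [R k p (int (length p) + int i - 1)])
             (clist k (win k p (int i) (length p - 1)))) (rev [1..<k * length p + 1]))"
proof -
  have pne: "p \<noteq> []" using assms by auto
  have "clist k p = concat (map (\<lambda>i. map (\<lambda>q. q @ [rget k p (int i)]) (clist k (rho_sub k p i)))
                      (rev [1..<k * length p + 1]))"
    using assms(1) clist.simps[of k p] by simp
  then show ?thesis
    by (simp only: rho_sub_eq[OF pne assms(2,3)] rget_eq[OF pne assms(2,3)])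
qed

lemma clist_base:
  assumes "length p = 1"
  shows "clist k p = map (\<lambda>s. cshiftl k (int s) p) [0..<k]"
  using assms clist.simps[of k p] by simp

lemma adj_Cons: "adj (x # L) a b \<longleftrightarrow> (L \<noteq> [] \<and> x = a \<and> hd L = b) \<or> adj L a b"
  by (cases L) auto

lemma adj_nth: "Suc i < length L \<Longrightarrow> adj L (L ! i) (L ! Suc i)"
proof (induction L arbitrary: i)
  case Nil then show ?case by simp
next
  case (Cons x L)
  show ?case
  proof (cases i)
    case 0
    then show ?thesis using Cons.prems by (cases L) auto
  next
    case (Suc i')
    then have "adj L (L ! i') (L ! Suc i')" using Cons by simp
    then show ?thesis using Suc by (simp add: adj_Cons)
  qed
qed

lemma adj_append:
  "adj (xs @ ys) a b \<Longrightarrow> adj xs a b \<or> adj ys a b \<or> (xs \<noteq> [] \<and> ys \<noteq> [] \<and> a = last xs \<and> b = hd ys)"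
proof (induction xs)
  case Nil then show ?case by simp
next
  case (Cons x xs)
  from Cons.prems have "(xs @ ys \<noteq> [] \<and> x = a \<and> hd (xs @ ys) = b) \<or> adj (xs @ ys) a b"
    by (simp only: append_Cons adj_Cons)
  then show ?case
  proof
    assume h: "xs @ ys \<noteq> [] \<and> x = a \<and> hd (xs @ ys) = b"
    show ?thesis
    proof (cases xs)
      case Nil then show ?thesis using h by simp
    next
      case (Cons y ys') then show ?thesis using h by (simp add: adj_Cons)
    qed
  next
    assume "adj (xs @ ys) a b"
    then have "adj xs a b \<or> adj ys a b \<or> (xs \<noteq> [] \<and> ys \<noteq> [] \<and> a = last xs \<and> b = hd ys)"
      by (rule Cons.IH)
    then show ?thesis by (auto simp: adj_Cons)
  qed
qed

lemma adj_map: "adj (map f xs) a b \<Longrightarrow> \<exists>a' b'. adj xs a' b' \<and> a = f a' \<and> b = f b'"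
proof (induction xs)
  case Nil then show ?case by simp
next
  case (Cons x xs)
  from Cons.prems have "(xs \<noteq> [] \<and> f x = a \<and> f (hd xs) = b) \<or> adj (map f xs) a b"
    by (auto simp: adj_Cons hd_map)
  then show ?case
  proof
    assume "xs \<noteq> [] \<and> f x = a \<and> f (hd xs) = b"
    then show ?thesis by (rule_tac x=x in exI, rule_tac x="hd xs" in exI) (auto simp: adj_Cons)
  next
    assume "adj (map f xs) a b"
    then obtain a' b' where "adj xs a' b'" "a = f a'" "b = f b'" using Cons.IH by blast
    then show ?thesis by (metis adj_Cons)
  qed
qed

lemma adj_concat:
  "(\<forall>xs\<in>set xss. xs \<noteq> []) \<Longrightarrow> adj (concat xss) a b \<Longrightarrow>
    (\<exists>xs\<in>set xss. adj xs a b) \<or> (\<exists>ys zs. adj xss ys zs \<and> a = last ys \<and> b = hd zs)"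
proof (induction xss)
  case Nil then show ?case by simp
next
  case (Cons xs xss)
  have "adj xs a b \<or> adj (concat xss) a b \<or>
        (xs \<noteq> [] \<and> concat xss \<noteq> [] \<and> a = last xs \<and> b = hd (concat xss))"
    using adj_append[of xs "concat xss" a b] Cons.prems by simp
  then show ?case
  proof (elim disjE)
    assume "adj xs a b" then show ?thesis by auto
  next
    assume "adj (concat xss) a b"
    then have "(\<exists>xs\<in>set xss. adj xs a b) \<or> (\<exists>ys zs. adj xss ys zs \<and> a = last ys \<and> b = hd zs)"
      using Cons by simp
    then show ?thesis by (auto simp: adj_Cons)
  next
    assume h: "xs \<noteq> [] \<and> concat xss \<noteq> [] \<and> a = last xs \<and> b = hd (concat xss)"
    then have ne: "xss \<noteq> []" by auto
    then have "hd xss \<noteq> []" using Cons.prems by simp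
    then have "hd (concat xss) = hd (hd xss)" using ne by (cases xss) auto
    then have "adj (xs # xss) xs (hd xss) \<and> a = last xs \<and> b = hd (hd xss)"
      using h ne by (simp add: adj_Cons)
    then show ?thesis by blast
  qed
qed

lemma adj_set: "adj L a b \<Longrightarrow> a \<in> set L \<and> b \<in> set L"
  by (induction L a b rule: adj.induct) auto

lemma adj_last: "distinct L \<Longrightarrow> adj L a b \<Longrightarrow> a \<noteq> last L"
proof (induction L a b rule: adj.induct)
  case (1 x y zs a b)
  show ?case
  proof (cases "x = a \<and> y = b")
    case True then show ?thesis using "1.prems"(1) by (auto simp: last_ConsR)
  next
    case False
    have "(x = a \<and> y = b) \<or> adj (y # zs) a b" using "1.prems"(2) by simp
    then have "adj (y # zs) a b" using False by blast
    then have "a \<noteq> last (y # zs)" using 1 by simp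
    then show ?thesis by simp
  qed
qed auto

lemma adj_upt: "adj [l..<h] a b \<Longrightarrow> b = Suc a \<and> l \<le> a \<and> b < h"
proof (induction h)
  case 0 then show ?case by simp
next
  case (Suc h)
  show ?case
  proof (cases "l \<le> h")
    case False then show ?thesis using Suc.prems by simp
  next
    case True
    then have "[l..<Suc h] = [l..<h] @ [h]" by simp
    then have "adj [l..<h] a b \<or> adj [h] a b \<or> ([l..<h] \<noteq> [] \<and> a = last [l..<h] \<and> b = h)"
      using adj_append[of "[l..<h]" "[h]" a b] Suc.prems by auto
    then show ?thesis
    proof (elim disjE)
      assume "adj [l..<h] a b" then show ?thesis using Suc.IH by simp
    next
      assume "adj [h] a b" then show ?thesis by simp
    next
      assume h: "[l..<h] \<noteq> [] \<and> a = last [l..<h] \<and> b = h"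
      then have "a = h - 1" "l < h" by (auto simp: last_upt)
      then show ?thesis using h by simp
    qed
  qed
qed

lemma adj_rev: "adj (rev xs) a b \<Longrightarrow> adj xs b a"
proof (induction xs)
  case Nil then show ?case by simp
next
  case (Cons x xs)
  have "adj (rev xs @ [x]) a b" using Cons.prems by simp
  then have "adj (rev xs) a b \<or> adj [x] a b \<or> (rev xs \<noteq> [] \<and> a = last (rev xs) \<and> b = x)"
    using adj_append[of "rev xs" "[x]" a b] by simp
  then show ?case
  proof (elim disjE)
    assume "adj (rev xs) a b" then show ?thesis using Cons.IH by (simp add: adj_Cons)
  next
    assume "adj [x] a b" then show ?thesis by simp
  next
    assume h: "rev xs \<noteq> [] \<and> a = last (rev xs) \<and> b = x"
    then show ?thesis by (simp add: adj_Cons last_rev)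
  qed
qed

lemma adj_idx: "adj (rev [1..<m + 1]) a b \<Longrightarrow> a = Suc b \<and> 1 \<le> b \<and> a \<le> m"
proof -
  assume "adj (rev [1..<m + 1]) a b"
  then have "adj [1..<m + 1] b a" by (rule adj_rev)
  then have "a = Suc b \<and> 1 \<le> b \<and> a < m + 1" by (rule adj_upt)
  then show ?thesis by simp
qed

definition Good :: "nat \<Rightarrow> centry list \<Rightarrow> centry list list \<Rightarrow> bool" where
  "Good k p L \<longleftrightarrow> L \<noteq> [] \<and> distinct L \<and> hd L = p \<and> last L = rev (map (cshift k (-1)) p) \<and>
     (\<forall>e\<in>set L. length e = length p \<and> fst ` set e = fst ` set p \<and> cw k e) \<and>
     (\<forall>a b l. adj L a b \<longrightarrow> maxdp k p a l \<longrightarrow> b = flip k l a)"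

lemma GoodD:
  assumes "Good k p L"
  shows "L \<noteq> []" "distinct L" "hd L = p" "last L = rev (map (cshift k (-1)) p)"
    and "\<And>e. e \<in> set L \<Longrightarrow> length e = length p"
    and "\<And>e. e \<in> set L \<Longrightarrow> fst ` set e = fst ` set p"
    and "\<And>e. e \<in> set L \<Longrightarrow> cw k e"
    and "\<And>a b l. adj L a b \<Longrightarrow> maxdp k p a l \<Longrightarrow> b = flip k l a"
  using assms unfolding Good_def by blast+

lemma flip_append: "l \<le> length a \<Longrightarrow> flip k l (a @ [x]) = flip k l a @ [x]"
  by (simp add: flip_def)

lemma flip_full:
  assumes "0 < k" "p \<noteq> []" "maxdp k p (rev (win k p (s + int (length p)) (length p))) l"
  shows "flip k l (rev (win k p (s + int (length p)) (length p))) = win k p s (length p)"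
proof -
  let ?a = "rev (win k p (s + int (length p)) (length p))"
  have d: "dpre k p ?a" unfolding dpre_def by (rule exI[of _ "s + int (length p)"]) simp
  have l: "l = length p"
  proof (rule ccontr)
    assume "l \<noteq> length p"
    then have "l < length p" using assms(3) by (simp add: maxdp_def)
    then have "\<not> dpre k p (take (length p) ?a)" using assms(3) unfolding maxdp_def by blast
    then show False using d by simp
  qed
  have "flip k l ?a = map (cshift k 1) (win k p (s + int (length p)) (length p))"
    unfolding l flip_def cshiftl_def by (simp add: rev_map)
  also have "\<dots> = win k p (s + int (length p) + int (length p) * (-1)) (length p)"
    using win_shift[OF assms(2,1), of "-1" "s + int (length p)" "length p"] by simp
  also have "\<dots> = win k p s (length p)" by simp
  finally show ?thesis .
qed

lemma sub_props:
  assumes "0 < k" "cw k p" "distinct (map fst p)" "2 \<le> length p"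
  shows "win k p (int i) (length p) = win k p (int i) (length p - 1) @ [R k p (int (length p) + int i - 1)]"
    and "distinct (map fst (win k p (int i) (length p)))"
    and "fst ` set (win k p (int i) (length p)) = fst ` set p"
proof -
  have pne: "p \<noteq> []" using assms by auto
  have e: "length p = Suc (length p - 1)" using assms by simp
  have "win k p (int i) (Suc (length p - 1)) = win k p (int i) (length p - 1) @ [R k p (int i + int (length p - 1))]"
    by (rule win_Suc)
  moreover have "int i + int (length p - 1) = int (length p) + int i - 1" using assms by simp
  ultimately show "win k p (int i) (length p) = win k p (int i) (length p - 1) @ [R k p (int (length p) + int i - 1)]"
    using e by metis
  show "distinct (map fst (win k p (int i) (length p)))"
    unfolding map_fst_win[OF pne assms(1,2)] using assms(3) by simp
  have "set (map fst (win k p (int i) (length p))) = set (map fst p)"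
    unfolding map_fst_win[OF pne assms(1,2)] by simp
  then show "fst ` set (win k p (int i) (length p)) = fst ` set p" by simp
qed

lemma dpre_sub:
  assumes "0 < k" "cw k p" "distinct (map fst p)" "2 \<le> length p"
    and "fst ` set q \<subseteq> fst ` set (win k p (int i) (length p - 1))"
  shows "dpre k (win k p (int i) (length p - 1)) q \<longleftrightarrow> dpre k p q"
proof -
  have pne: "p \<noteq> []" using assms by auto
  let ?u = "win k p (int i) (length p)"
  let ?W = "win k p (int i) (length p - 1)"
  let ?X = "R k p (int (length p) + int i - 1)"
  have u: "?u = ?W @ [?X]" by (rule sub_props(1)[OF assms(1-4)])
  have bl: "butlast ?u = ?W" and lu: "last ?u = ?X" unfolding u by simp_all
  have "distinct (map fst ?u)" by (rule sub_props(2)[OF assms(1-4)])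
  then have "fst ?X \<notin> set (map fst ?W)" unfolding u by simp
  then have nq: "fst (last ?u) \<notin> fst ` set q" using assms(5) lu by auto
  have "dpre k (butlast ?u) q \<longleftrightarrow> dpre k ?u q"
    by (rule dpre_butlast[OF cw_win[OF assms(1)] assms(1) _ nq]) (simp add: assms(4))
  also have "\<dots> \<longleftrightarrow> dpre k p q" by (rule dpre_win[OF pne assms(1)])
  finally show ?thesis unfolding bl .
qed

lemma maxdp_sub:
  assumes "0 < k" "cw k p" "distinct (map fst p)" "2 \<le> length p"
    and "maxdp k p (a' @ [x]) l" "l < length p" "length a' = length p - 1"
    and "fst ` set a' \<subseteq> fst ` set (win k p (int i) (length p - 1))"
  shows "maxdp k (win k p (int i) (length p - 1)) a' l"
proof -
  have eq: "dpre k (win k p (int i) (length p - 1)) (take m a') \<longleftrightarrow> dpre k p (take m (a' @ [x]))"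
    if "m \<le> length p - 1" for m
  proof -
    have t: "take m (a' @ [x]) = take m a'" using that assms(7) by simp
    have "fst ` set (take m a') \<subseteq> fst ` set a'" by (meson image_mono set_take_subset)
    then have "fst ` set (take m a') \<subseteq> fst ` set (win k p (int i) (length p - 1))"
      using assms(8) by blast
    then show ?thesis unfolding t by (rule dpre_sub[OF assms(1-4)])
  qed
  have m: "1 \<le> l" "dpre k p (take l (a' @ [x]))"
    "\<And>l'. l < l' \<Longrightarrow> l' \<le> length p \<Longrightarrow> \<not> dpre k p (take l' (a' @ [x]))"
    using assms(5) unfolding maxdp_def by auto
  show ?thesis unfolding maxdp_def length_win
    using m eq assms(6) by auto
qed

lemma full_case:
  assumes "0 < k" "cw k p" "distinct (map fst p)" "2 \<le> length p"
    and "dpre k p (a' @ [R k p (int (length p) + int i - 1)])" "length a' = length p - 1"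
  shows "a' = rev (win k p (int i + int (length p)) (length p - 1))"
proof -
  have pne: "p \<noteq> []" using assms by auto
  let ?X = "R k p (int (length p) + int i - 1)"
  obtain s where s: "subseq (a' @ [?X]) (rev (win k p s (length p)))"
    using assms(5) unfolding dpre_def by blast
  have "length (a' @ [?X]) = length (rev (win k p s (length p)))" using assms(4,6) by simp
  then have eq: "a' @ [?X] = rev (win k p s (length p))" using s subseq_same_length by blast
  have e: "length p = Suc (length p - 1)" using assms(4) by simp
  have "win k p s (length p) = win k p s (Suc (length p - 1))" by (rule arg_cong[OF e])
  also have "\<dots> = R k p s # win k p (s + 1) (length p - 1)" by (rule win_Cons)
  finally have "a' @ [?X] = rev (win k p (s + 1) (length p - 1)) @ [R k p s]" using eq by simp
  then have a: "a' = rev (win k p (s + 1) (length p - 1))" and x: "?X = R k p s" by simp_all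
  obtain m where m: "int (length p) + int i - 1 = s + int (length p * k) * m"
    using R_inj[OF pne assms(1,3) x[symmetric]] by blast
  have "s + 1 = (int i + int (length p)) + int (length p * k) * (- m)" using m by simp
  then have "win k p (s + 1) (length p - 1) = win k p (int i + int (length p)) (length p - 1)"
    using win_period[OF pne assms(1)] by metis
  then show ?thesis using a by simp
qed

lemma G_base:
  assumes "0 < k" "length p = 1" "cw k p"
  shows "Good k p (clist k p)"
proof -
  obtain e where p: "p = [e]" using assms(2) by (metis length_0_conv length_Suc_conv One_nat_def)
  have ek: "snd e < k" using assms(3) p by (simp add: cw_def)
  define f where "f = (\<lambda>s::nat. [cshift k (int s) e])"
  have L: "clist k p = map f [0..<k]"
    using clist_base[OF assms(2)] unfolding p f_def by (simp add: cshiftl_def)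
  have inj: "inj_on f {0..<k}"
  proof (rule inj_onI)
    fix s s' assume s: "s \<in> {0..<k}" "s' \<in> {0..<k}" "f s = f s'"
    then have "cshift k (int s) e = cshift k (int s') e" by (simp add: f_def)
    then have "int s mod int k = int s' mod int k" by (rule cshift_inj[OF assms(1)])
    then show "s = s'" using s(1,2) by simp
  qed
  have ne: "clist k p \<noteq> []" unfolding L using assms(1) by simp
  have dist: "distinct (clist k p)" unfolding L using inj by (simp add: distinct_map)
  have hd: "hd (clist k p) = p" unfolding L unfolding p f_def using assms(1) ek
    by (simp add: hd_map cshift_0)
  have "cshift k (int (k - 1)) e = cshift k (-1) e"
  proof (rule cshift_cong)
    have "int (k - 1) = -1 + int k * 1" using assms(1) by simp
    then show "int (k - 1) mod int k = (-1) mod int k" by (metis mod_mult_self1 mult.commute)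
  qed
  then have last: "last (clist k p) = rev (map (cshift k (-1)) p)" unfolding L unfolding p f_def using assms(1)
    by (simp add: last_map)
  have elems: "\<forall>x\<in>set (clist k p). length x = length p \<and> fst ` set x = fst ` set p \<and> cw k x"
    unfolding L unfolding p f_def by (auto simp: cw_def snd_cshift_less[OF assms(1)])
  have adjs: "\<forall>a b l. adj (clist k p) a b \<longrightarrow> maxdp k p a l \<longrightarrow> b = flip k l a"
  proof (intro allI impI)
    fix a b l assume ab: "adj (clist k p) a b" and m: "maxdp k p a l"
    obtain s s' where ss: "adj [0..<k] s s'" "a = f s" "b = f s'"
      using adj_map[OF ab[unfolded L]] by blast
    have "s' = Suc s" using adj_upt[OF ss(1)] by simp
    then have a: "a = f s" and b: "b = f (Suc s)" using ss by simp_all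
    have l: "l = 1" using m assms(2) by (simp add: maxdp_def)
    have "flip k l a = [cshift k 1 (cshift k (int s) e)]"
      unfolding l a f_def by (simp add: flip_def cshiftl_def)
    also have "\<dots> = b" unfolding b f_def by (simp add: cshift_cshift[OF assms(1)] add.commute)
    finally show "b = flip k l a" by simp
  qed
  show ?thesis unfolding Good_def using ne dist hd last elems adjs by blast
qed

lemma G_step:
  assumes k: "0 < k" and cwp: "cw k p" and dp: "distinct (map fst p)" and j2: "2 \<le> length p"
    and IH: "\<And>q. length q = length p - 1 \<Longrightarrow> cw k q \<Longrightarrow> distinct (map fst q) \<Longrightarrow> Good k q (clist k q)"
  shows "Good k p (clist k p)"
proof -
  have pne: "p \<noteq> []" using j2 by auto
  define j where "j = length p"
  define N where "N = k * j"
  have N1: "1 \<le> N" using k j2 unfolding N_def j_def by simp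
  define W where "W i = win k p (int i) (j - 1)" for i
  define X where "X i = R k p (int j + int i - 1)" for i
  define B where "B i = map (\<lambda>q. q @ [X i]) (clist k (W i))" for i
  define idx where "idx = rev [1..<N + 1]"
  have L: "clist k p = concat (map B idx)"
    unfolding clist_step[OF j2 k cwp] B_def idx_def W_def X_def N_def j_def ..
  have U: "win k p (int i) j = W i @ [X i]" for i
    unfolding W_def X_def j_def by (rule sub_props(1)[OF k cwp dp j2])
  have distU: "distinct (map fst (W i) @ [fst (X i)])" for i
    using sub_props(2)[OF k cwp dp j2, of i] U[of i] unfolding j_def by simp
  have xn: "fst (X i) \<notin> fst ` set (W i)" for i using distU[of i] by simp
  have fstU: "fst ` set (W i) \<union> {fst (X i)} = fst ` set p" for i
    using sub_props(3)[OF k cwp dp j2, of i] U[of i] unfolding j_def by simp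
  have GW: "Good k (W i) (clist k (W i))" for i
  proof (rule IH)
    show "length (W i) = length p - 1" unfolding W_def j_def by simp
    show "cw k (W i)" unfolding W_def by (rule cw_win[OF k])
    show "distinct (map fst (W i))" using distU[of i] by simp
  qed
  have lastW: "last (clist k (W i)) = rev (win k p (int i + int j) (j - 1))" for i
  proof -
    have "last (clist k (W i)) = rev (map (cshift k (-1)) (W i))" using GoodD(4)[OF GW[of i]] .
    also have "map (cshift k (-1)) (W i) = win k p (int i + int j) (j - 1)"
      unfolding W_def j_def using win_shift[OF pne k, of 1 "int i" "length p - 1"] by simp
    finally show ?thesis .
  qed
  have hdW: "hd (clist k (W i)) = W i" for i using GoodD(3)[OF GW[of i]] .
  have neW: "clist k (W i) \<noteq> []" for i using GoodD(1)[OF GW[of i]] .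
  have distW: "distinct (clist k (W i))" for i using GoodD(2)[OF GW[of i]] .
  have Bne: "B i \<noteq> []" for i unfolding B_def using neW by simp
  have hdB: "hd (B i) = W i @ [X i]" for i unfolding B_def using neW[of i] hdW[of i] by (simp add: hd_map)
  have lastB: "last (B i) = rev (win k p (int i + int j) (j - 1)) @ [X i]" for i
    unfolding B_def using neW[of i] lastW[of i] by (simp add: last_map)
  have setidx: "set idx = {1..N}" unfolding idx_def by auto
  have Xinj: "i = i'" if xi: "i \<in> set idx" "i' \<in> set idx" "X i = X i'" for i i'
  proof -
    obtain m where m: "int j + int i' - 1 = int j + int i - 1 + int (length p * k) * m"
      using R_inj[OF pne k dp xi(3)[unfolded X_def]] by blast
    have "int N * m = int i' - int i" using m unfolding N_def j_def by (simp add: algebra_simps)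
    moreover have "int i' - int i < int N" "int i' - int i > - int N" using xi(1,2) setidx by auto
    ultimately have c1: "int N * m < int N * 1" and c2: "int N * (-1) < int N * m" by simp_all
    have p0: "0 < int N" using N1 by simp
    have "m < 1" using mult_less_cancel_left_pos[OF p0] c1 by blast
    moreover have "-1 < m" using mult_less_cancel_left_pos[OF p0] c2 by blast
    ultimately have "m = 0" by simp
    then show "i = i'" using m by simp
  qed
  have elB: "\<exists>q\<in>set (clist k (W i)). e = q @ [X i]" if "e \<in> set (B i)" for e i
    using that unfolding B_def by auto
  have ne: "clist k p \<noteq> []" unfolding L idx_def using Bne N1 by auto
  have dist: "distinct (clist k p)" unfolding L
  proof (rule distinct_concat)
    have "inj_on B (set idx)"
    proof (rule inj_onI)
      fix i i' assume ii: "i \<in> set idx" "i' \<in> set idx" "B i = B i'"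
      then have "last (hd (B i)) = last (hd (B i'))" by simp
      then have "X i = X i'" unfolding hdB by simp
      then show "i = i'" using Xinj ii by blast
    qed
    then show "distinct (map B idx)" unfolding idx_def by (simp add: distinct_map)
    show "distinct ys" if ysin: "ys \<in> set (map B idx)" for ys
    proof -
      obtain i where ys: "ys = B i" using ysin by auto
      have "inj_on (\<lambda>q. q @ [X i]) (set (clist k (W i)))" by (rule inj_onI) simp
      then show "distinct ys" unfolding ys B_def using distW by (simp add: distinct_map)
    qed
    show "set ys \<inter> set zs = {}"
      if h0: "ys \<in> set (map B idx)" "zs \<in> set (map B idx)" "ys \<noteq> zs" for ys zs
    proof -
      have h: "ys \<in> set (map B idx) \<and> zs \<in> set (map B idx) \<and> ys \<noteq> zs" using h0 by blast
      then obtain i i' where ii: "i \<in> set idx" "i' \<in> set idx" "ys = B i" "zs = B i'" by auto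
      show "set ys \<inter> set zs = {}"
      proof (rule ccontr)
        assume "set ys \<inter> set zs \<noteq> {}"
        then obtain e where "e \<in> set (B i)" "e \<in> set (B i')" using ii by auto
        obtain q where q: "e = q @ [X i]" using elB \<open>e \<in> set (B i)\<close> by blast
        obtain q' where q': "e = q' @ [X i']" using elB \<open>e \<in> set (B i')\<close> by blast
        have "X i = X i'" using q q' by (metis last_snoc)
        then have "i = i'" using Xinj ii by blast
        then show False using h ii by simp
      qed
    qed
  qed
  have idx1: "idx = N # rev [1..<N]" unfolding idx_def using N1 by simp
  have "hd (clist k p) = hd (B N)" unfolding L idx1 using Bne[of N] by (simp add: hd_append2)
  also have "\<dots> = win k p (int N) j" unfolding hdB U ..
  also have "\<dots> = win k p (0 + int (length p * k) * 1) (length p)" unfolding N_def j_def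
    by (simp add: mult.commute)
  also have "\<dots> = p" unfolding win_period[OF pne k] win_0[OF cwp] ..
  finally have hd: "hd (clist k p) = p" .
  have "[1..<N + 1] = 1 # [Suc 1..<N + 1]" using N1 by (rule_tac upt_conv_Cons) simp
  then have idx2: "idx = rev [Suc 1..<N + 1] @ [1]" unfolding idx_def by (simp only: rev.simps)
  have "last (clist k p) = last (B 1)" unfolding L idx2 using Bne[of 1] by simp
  also have "\<dots> = rev (win k p (int j + 1) (j - 1)) @ [R k p (int j)]"
    unfolding lastB X_def by (simp add: add.commute)
  also have "\<dots> = rev (win k p (int j) j)"
  proof -
    have e: "j = Suc (j - 1)" using j2 unfolding j_def by simp
    have "win k p (int j) j = win k p (int j) (Suc (j - 1))" by (rule arg_cong[OF e])
    also have "\<dots> = R k p (int j) # win k p (int j + 1) (j - 1)" by (rule win_Cons)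
    finally show ?thesis by simp
  qed
  also have "win k p (int j) j = map (cshift k (-1)) p"
    using win_shift[OF pne k, of 1 0 "length p"] win_0[OF cwp] unfolding j_def by simp
  finally have last: "last (clist k p) = rev (map (cshift k (-1)) p)" .
  have elems: "\<forall>e\<in>set (clist k p). length e = length p \<and> fst ` set e = fst ` set p \<and> cw k e"
  proof
    fix e assume "e \<in> set (clist k p)"
    then obtain i where "i \<in> set idx" "e \<in> set (B i)" unfolding L by auto
    then obtain q where q: "q \<in> set (clist k (W i))" "e = q @ [X i]" using elB by blast
    have "length q = length (W i) \<and> fst ` set q = fst ` set (W i) \<and> cw k q"
      using GoodD(5-7)[OF GW[of i] q(1)] by blast
    moreover have "snd (X i) < k" unfolding X_def by (rule snd_R_less[OF k])
    ultimately show "length e = length p \<and> fst ` set e = fst ` set p \<and> cw k e"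
      using q(2) fstU[of i] j2 unfolding W_def j_def by (auto simp: cw_def)
  qed
  have adjs: "\<forall>a b l. adj (clist k p) a b \<longrightarrow> maxdp k p a l \<longrightarrow> b = flip k l a"
  proof (intro allI impI)
    fix a b l assume ab: "adj (clist k p) a b" and m: "maxdp k p a l"
    have "\<forall>xs\<in>set (map B idx). xs \<noteq> []" using Bne by auto
    from adj_concat[OF this ab[unfolded L]]
    show "b = flip k l a"
    proof (elim disjE)
      assume "\<exists>xs\<in>set (map B idx). adj xs a b"
      then obtain i where abi: "adj (B i) a b" by auto
      obtain a' b' where ab': "adj (clist k (W i)) a' b'" "a = a' @ [X i]" "b = b' @ [X i]"
        using adj_map[of "\<lambda>q. q @ [X i]" "clist k (W i)" a b] abi unfolding B_def by blast
      have a'in: "a' \<in> set (clist k (W i))" using adj_set[OF ab'(1)] by simp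
      have a'p: "length a' = length p - 1" "fst ` set a' = fst ` set (W i)"
        using GoodD(5)[OF GW[of i] a'in] GoodD(6)[OF GW[of i] a'in] unfolding W_def j_def by simp_all
      have "l \<le> length p" using m by (simp add: maxdp_def)
      show ?thesis
      proof (cases "l = length p")
        case True
        then have "dpre k p (take (length p) a)" using m by (simp add: maxdp_def)
        moreover have "take (length p) a = a" using ab'(2) a'p j2 by simp
        ultimately have "dpre k p (a' @ [X i])" using ab'(2) by simp
        then have "dpre k p (a' @ [R k p (int (length p) + int i - 1)])" unfolding X_def j_def .
        then have "a' = rev (win k p (int i + int (length p)) (length p - 1))"
          by (rule full_case[OF k cwp dp j2 _ a'p(1)])
        then have "a' = last (clist k (W i))" using lastW unfolding j_def by simp
        then show ?thesis using adj_last[OF distW ab'(1)] by simp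
      next
        case False
        then have lt: "l < length p" using \<open>l \<le> length p\<close> by simp
        have "maxdp k (W i) a' l" unfolding W_def j_def
          by (rule maxdp_sub[OF k cwp dp j2 m[unfolded ab'(2)] lt a'p(1)])
            (use a'p(2) in \<open>simp add: W_def j_def\<close>)
        then have "b' = flip k l a'" using GoodD(8)[OF GW[of i] ab'(1)] by blast
        moreover have "l \<le> length a'" using lt a'p(1) by simp
        ultimately show ?thesis using ab'(2,3) flip_append by simp
      qed
    next
      assume "\<exists>ys zs. adj (map B idx) ys zs \<and> a = last ys \<and> b = hd zs"
      then obtain ys zs where h: "adj (map B idx) ys zs" "a = last ys" "b = hd zs" by blast
      obtain i i' where ii: "adj idx i i'" "ys = B i" "zs = B i'" using adj_map[OF h(1)] by blast
      have i: "i = Suc i'" using adj_idx[OF ii(1)[unfolded idx_def]] by simp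
      have e: "j = Suc (j - 1)" using j2 unfolding j_def by simp
      have "win k p (int i' + int j) j = win k p (int i' + int j) (Suc (j - 1))" by (rule arg_cong[OF e])
      also have "\<dots> = R k p (int i' + int j) # win k p (int i' + int j + 1) (j - 1)" by (rule win_Cons)
      finally have w: "rev (win k p (int i' + int j) j) = rev (win k p (int i + int j) (j - 1)) @ [X i]"
        unfolding X_def i by (simp add: algebra_simps)
      have a: "a = rev (win k p (int i' + int (length p)) (length p))"
        using h(2) ii(2) lastB[of i] w unfolding j_def by simp
      have b: "b = win k p (int i') (length p)" using h(3) ii(3) hdB[of i'] U[of i'] unfolding j_def by simp
      show ?thesis unfolding a b by (rule flip_full[OF k pne m[unfolded a], symmetric])
    qed
  qed
  show ?thesis unfolding Good_def using ne dist hd last elems adjs by blast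
qed

lemma G:
  assumes "0 < k" "p \<noteq> []" "cw k p" "distinct (map fst p)"
  shows "Good k p (clist k p)"
proof -
  have "\<forall>p. length p = n \<longrightarrow> p \<noteq> [] \<longrightarrow> cw k p \<longrightarrow> distinct (map fst p) \<longrightarrow> Good k p (clist k p)" for n
  proof (induction n)
    case 0 then show ?case by simp
  next
    case (Suc n)
    show ?case
    proof (intro allI impI)
      fix p :: "centry list" assume h: "length p = Suc n" "p \<noteq> []" "cw k p" "distinct (map fst p)"
      show "Good k p (clist k p)"
      proof (cases n)
        case 0 then show ?thesis using G_base[OF assms(1) _ h(3)] h(1) by simp
      next
        case (Suc n')
        show ?thesis
        proof (rule G_step[OF assms(1) h(3) h(4)])
          show "2 \<le> length p" using h(1) Suc by simp
          fix q :: "centry list" assume q: "length q = length p - 1" "cw k q" "distinct (map fst q)"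
          then have "q \<noteq> []" using h(1) Suc by auto
          then show "Good k q (clist k q)" using Suc.IH q h(1) by simp
        qed
      qed
    qed
  qed
  then show ?thesis using assms by blast
qed

lemma idperm_props:
  assumes "1 \<le> n" "0 < k"
  shows "idperm n \<noteq> []" "length (idperm n) = n" "cw k (idperm n)"
  using assms by (auto simp: idperm_def cw_def)

lemma rget_idperm:
  assumes "1 \<le> n" "0 < k"
  shows "map (\<lambda>d. rget k (idperm n) (i + int d)) [0..<n] = win k (idperm n) (int n + i - 1) n"
  unfolding win_def
  by (rule map_cong[OF refl])
     (simp add: rget_eq[OF idperm_props(1)[OF assms] assms(2) idperm_props(3)[OF assms]] idperm_props(2)[OF assms] algebra_simps)

lemma increasing_win:
  assumes "1 \<le> n" "0 < k" "increasing n k p"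
  shows "\<exists>s. p = win k (idperm n) s n"
proof -
  obtain i where "p = map (\<lambda>d. rget k (idperm n) (i + int d)) [0..<n]"
    using assms(3) unfolding increasing_def by blast
  then have "p = win k (idperm n) (int n + i - 1) n" using rget_idperm[OF assms(1,2)] by simp
  then show ?thesis by blast
qed

lemma dec_iff:
  assumes "1 \<le> n" "0 < k"
  shows "(\<exists>p. decreasing n k p \<and> subseq q p) \<longleftrightarrow> dpre k (idperm n) q"
proof
  assume "\<exists>p. decreasing n k p \<and> subseq q p"
  then obtain p where p: "increasing n k (rev p)" "subseq q p" unfolding decreasing_def by blast
  then obtain s where "rev p = win k (idperm n) s n" using increasing_win[OF assms] by blast
  then have "p = rev (win k (idperm n) s n)" by (metis rev_rev_ident)
  then show "dpre k (idperm n) q" unfolding dpre_def idperm_props(2)[OF assms] using p(2) by blast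
next
  assume "dpre k (idperm n) q"
  then obtain s where s: "subseq q (rev (win k (idperm n) s n))"
    unfolding dpre_def idperm_props(2)[OF assms] by blast
  have "rev (rev (win k (idperm n) s n)) = map (\<lambda>d. rget k (idperm n) ((s - int n + 1) + int d)) [0..<n]"
    unfolding rget_idperm[OF assms] by simp
  then have "decreasing n k (rev (win k (idperm n) s n))"
    unfolding decreasing_def increasing_def by blast
  then show "\<exists>p. decreasing n k p \<and> subseq q p" using s by blast
qed

theorem lemma6:
  fixes n k :: nat and \<pi> :: "centry list" and i j :: nat
  assumes "n \<ge> 1" and "k \<ge> 1"
    and "\<pi> \<in> cperms n k" and "increasing n k \<pi>"
    and "i < length (clist k \<pi>)"
    and "1 \<le> j" and "j \<le> n"
    and "decreasing_pre n k (take j (clist k \<pi> ! i))"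
    and "\<forall>j'. j < j' \<and> j' \<le> n \<longrightarrow> \<not> decreasing_pre n k (take j' (clist k \<pi> ! i))"
  shows "clist k \<pi> ! ((i + 1) mod length (clist k \<pi>)) = flip k j (clist k \<pi> ! i)"
proof -
  have k: "0 < k" using assms(2) by simp
  have pl: "length \<pi> = n" and pd: "distinct (map fst \<pi>)" and ps: "set (map fst \<pi>) = {1..n}"
    and pc: "cw k \<pi>"
    using assms(3) by (auto simp: cperms_def cw_def)
  have pne: "\<pi> \<noteq> []" using pl assms(1) by auto
  define L where "L = clist k \<pi>"
  have G: "Good k \<pi> L" unfolding L_def by (rule G[OF k pne pc pd])
  obtain s0 where s0: "\<pi> = win k (idperm n) s0 n" using increasing_win[OF assms(1) k assms(4)] by blast
  have dpi: "dpre k (idperm n) q \<longleftrightarrow> dpre k \<pi> q" for q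
    using dpre_win[OF idperm_props(1)[OF assms(1) k] k, of s0 q] s0 idperm_props(2)[OF assms(1) k]
    by simp
  define e where "e = L ! i"
  have ein: "e \<in> set L" unfolding e_def L_def using assms(5) by simp
  have ecp: "e \<in> cperms n k"
  proof -
    have el: "length e = n" using GoodD(5)[OF G ein] pl by simp
    have ef: "set (map fst e) = {1..n}" using GoodD(6)[OF G ein] ps by simp
    have "card (set (map fst e)) = length (map fst e)" using ef el by simp
    then have "distinct (map fst e)" by (rule card_distinct)
    then show ?thesis using el ef GoodD(7)[OF G ein] by (simp add: cperms_def cw_def)
  qed
  have dp_iff: "decreasing_pre n k (take l e) \<longleftrightarrow> dpre k \<pi> (take l e)" if "1 \<le> l" "l \<le> n" for l
  proof -
    have "preperm n k (take l e)" unfolding preperm_def using ecp that by blast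
    then show ?thesis unfolding decreasing_pre_def dec_iff[OF assms(1) k] dpi by simp
  qed
  have m: "maxdp k \<pi> e j"
    unfolding maxdp_def pl using assms(6-9) dp_iff unfolding e_def L_def by auto
  show ?thesis
  proof (cases "Suc i < length L")
    case True
    then have "(i + 1) mod length L = Suc i" by simp
    moreover have "adj L e (L ! Suc i)" unfolding e_def by (rule adj_nth[OF True])
    ultimately show ?thesis using GoodD(8)[OF G _ m] unfolding e_def L_def by simp
  next
    case False
    then have li: "length L = Suc i" using assms(5) unfolding L_def by simp
    then have "(i + 1) mod length L = 0" by simp
    moreover have "L ! 0 = \<pi>" using GoodD(1,3)[OF G] by (simp add: hd_conv_nth)
    moreover have "e = rev (map (cshift k (-1)) \<pi>)"
      using GoodD(1,4)[OF G] li unfolding e_def by (simp add: last_conv_nth)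
    moreover have "map (cshift k (-1)) \<pi> = win k \<pi> (0 + int (length \<pi>)) (length \<pi>)"
      using win_shift[OF pne k, of 1 0 "length \<pi>"] win_0[OF pc] by simp
    moreover have "win k \<pi> 0 (length \<pi>) = \<pi>" by (rule win_0[OF pc])
    ultimately show ?thesis using flip_full[OF k pne, of 0 j] m unfolding e_def L_def by simp
  qed
qed

end
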